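(* For every $\mu\in P^+$, $$\|F_{\mu+\rho}\|_m^2=\int_T|F_{\mu+\rho}(t)|^2\,\delta(m,t)\,dt=\frac{I_\delta}{d(\mu)},\qquad\text{where }I_\delta=\int_T\delta(m,t)\,dt.$$ Equivalently, $\|F_{\mu+\rho}\|_m^2=I_\delta\,c^*(-\mu-\rho)\,c(\mu+\rho)$.
   Context: Setting. $\mathfrak a$ is an $l$-dimensional real Euclidean space. $\Sigma\subset\mathfrak a^*$ is a (possibly non-reduced) root system with Weyl group $W$. $m:\Sigma\to\,]0,\infty[$ is $W$-invariant, and $m_\alpha=0$ for $\alpha\notin\Sigma$. Fix positive roots $\Sigma^+$. Set $\lambda_\alpha=\langle\lambda,\alpha\rangle/\langle\alpha,\alpha\rangle$, $\rho=\frac12\sum_{\alpha\in\Sigma^+}m_\alpha\alpha$, and $P^+=\{\mu\in\mathfrak a^*:\mu_\alpha\in\mathbb Z_{\ge0}\ \forall\alpha\in\Sigma^+\}$. Torus. $T=\exp(i\mathfrak a)\subset A_{\mathbb C}=\mathfrak a_{\mathbb C}/2\pi i\,\mathbb Z\{H_\alpha\}$, with $H_\alpha=2A_\alpha/\langle A_\alpha,A_\alpha\rangle$, $\alpha(H)=\langle H,A_\alpha\rangle$. $dt$ is the normalized Haar measure on $T$, and $\delta(m,\exp iH)=\prod_{\alpha\in\Sigma^+}|e^{i\alpha(H)}-e^{-i\alpha(H)}|^{m_\alpha}$. $c$-functions. For $\alpha\in\Sigma^+$, $$c_\alpha(\lambda)=\frac{\Gamma(\lambda_\alpha+m_{\alpha/2}/4)}{\Gamma(\lambda_\alpha+m_{\alpha/2}/4+m_\alpha/2)},\qquad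 c^*_\alpha(\lambda)=\frac{\Gamma(1-\lambda_\alpha-m_{\alpha/2}/4-m_\alpha/2)}{\Gamma(1-\lambda_\alpha-m_{\alpha/2}/4)}.$$ Set $\tilde c=\prod c_\alpha$, $\tilde c^*=\prod c^*_\alpha$, $c=\tilde c/\tilde c(\rho)$, $c^*=\tilde c^*/\tilde c^*(-\rho)$, and $d(\lambda)=1/(c(\lambda+\rho)c^*(-\lambda-\rho))$. $F_{\mu+\rho}$ is the Heckman–Opdam hypergeometric function (root system $2\Sigma$, multiplicity $k_{2\alpha}=m_\alpha/2$, $F(e)=1$), extended holomorphically to $A_{\mathbb C}$ via $F_{\mu+\rho}=c(\mu+\rho)P_\mu$, where $P_\mu$ is the Heckman–Opdam Jacobi polynomial. Opdam's norm formula $\|P_\mu\|_m^2=|W|\,\tilde c^*(-\mu-\rho)/\tilde c(\mu+\rho)$ may be used. *)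

theory Defs
  imports "HOL-Analysis.Analysis"
begin

text \<open>The space a (and its dual, identified via the inner product) is an abstract
  Euclidean space 'a. A root alpha is identified with the vector A_alpha, so that
  alpha(H) = H \<bullet> alpha.\<close>

definition reflect :: "'a::euclidean_space \<Rightarrow> 'a \<Rightarrow> 'a" where
  "reflect \<alpha> x = x - (2 * (x \<bullet> \<alpha>) / (\<alpha> \<bullet> \<alpha>)) *\<^sub>R \<alpha>"

text \<open>(Possibly non-reduced) root system spanning the space.\<close>
definition root_system :: "'a::euclidean_space set \<Rightarrow> bool" where
  "root_system R \<longleftrightarrow> finite R \<and> 0 \<notin> R \<and> span R = UNIV \<and>
     (\<forall>\<alpha>\<in>R. \<forall>\<beta>\<in>R. reflect \<alpha> \<beta> \<in> R \<and> 2 * (\<beta> \<bullet> \<alpha>) / (\<alpha> \<bullet> \<alpha>) \<in> \<int>)"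

inductive_set weyl_group :: "'a::euclidean_space set \<Rightarrow> ('a \<Rightarrow> 'a) set" for R where
  weyl_id: "id \<in> weyl_group R"
| weyl_step: "\<alpha> \<in> R \<Longrightarrow> w \<in> weyl_group R \<Longrightarrow> reflect \<alpha> \<circ> w \<in> weyl_group R"

definition positive_system :: "'a::euclidean_space set \<Rightarrow> 'a set \<Rightarrow> bool" where
  "positive_system R Rp \<longleftrightarrow>
     (\<exists>H0. (\<forall>\<alpha>\<in>R. \<alpha> \<bullet> H0 \<noteq> 0) \<and> Rp = {\<alpha>\<in>R. \<alpha> \<bullet> H0 > 0})"

definition multiplicity :: "'a::euclidean_space set \<Rightarrow> ('a \<Rightarrow> real) \<Rightarrow> bool" where
  "multiplicity R m \<longleftrightarrow> (\<forall>\<alpha>\<in>R. m \<alpha> > 0) \<and> (\<forall>\<alpha>. \<alpha> \<notin> R \<longrightarrow> m \<alpha> = 0) \<and>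
     (\<forall>w\<in>weyl_group R. \<forall>\<alpha>\<in>R. m (w \<alpha>) = m \<alpha>)"

definition coord :: "'a::euclidean_space \<Rightarrow> 'a \<Rightarrow> real" where
  "coord lam \<alpha> = (lam \<bullet> \<alpha>) / (\<alpha> \<bullet> \<alpha>)"

definition rho :: "'a::euclidean_space set \<Rightarrow> ('a \<Rightarrow> real) \<Rightarrow> 'a" where
  "rho Rp m = (1/2) *\<^sub>R (\<Sum>\<alpha>\<in>Rp. m \<alpha> *\<^sub>R \<alpha>)"

definition dominant :: "'a::euclidean_space set \<Rightarrow> 'a set" where
  "dominant Rp = {\<mu>. \<forall>\<alpha>\<in>Rp. coord \<mu> \<alpha> \<in> \<nat>}"

definition c_alpha :: "('a::euclidean_space \<Rightarrow> real) \<Rightarrow> 'a \<Rightarrow> 'a \<Rightarrow> real" where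
  "c_alpha m lam \<alpha> = Gamma (coord lam \<alpha> + m ((1/2) *\<^sub>R \<alpha>) / 4) /
                   Gamma (coord lam \<alpha> + m ((1/2) *\<^sub>R \<alpha>) / 4 + m \<alpha> / 2)"

definition cstar_alpha :: "('a::euclidean_space \<Rightarrow> real) \<Rightarrow> 'a \<Rightarrow> 'a \<Rightarrow> real" where
  "cstar_alpha m lam \<alpha> = Gamma (1 - coord lam \<alpha> - m ((1/2) *\<^sub>R \<alpha>) / 4 - m \<alpha> / 2) /
                       Gamma (1 - coord lam \<alpha> - m ((1/2) *\<^sub>R \<alpha>) / 4)"

definition ctilde :: "'a::euclidean_space set \<Rightarrow> ('a \<Rightarrow> real) \<Rightarrow> 'a \<Rightarrow> real" where
  "ctilde Rp m lam = (\<Prod>\<alpha>\<in>Rp. c_alpha m lam \<alpha>)"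

definition ctilde_star :: "'a::euclidean_space set \<Rightarrow> ('a \<Rightarrow> real) \<Rightarrow> 'a \<Rightarrow> real" where
  "ctilde_star Rp m lam = (\<Prod>\<alpha>\<in>Rp. cstar_alpha m lam \<alpha>)"

definition c_fun :: "'a::euclidean_space set \<Rightarrow> ('a \<Rightarrow> real) \<Rightarrow> 'a \<Rightarrow> real" where
  "c_fun Rp m lam = ctilde Rp m lam / ctilde Rp m (rho Rp m)"

definition cstar_fun :: "'a::euclidean_space set \<Rightarrow> ('a \<Rightarrow> real) \<Rightarrow> 'a \<Rightarrow> real" where
  "cstar_fun Rp m lam = ctilde_star Rp m lam / ctilde_star Rp m (- rho Rp m)"

definition d_fun :: "'a::euclidean_space set \<Rightarrow> ('a \<Rightarrow> real) \<Rightarrow> 'a \<Rightarrow> real" where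
  "d_fun Rp m lam = 1 / (c_fun Rp m (lam + rho Rp m) * cstar_fun Rp m (- lam - rho Rp m))"

definition coroot :: "'a::euclidean_space \<Rightarrow> 'a" where
  "coroot \<alpha> = (2 / (\<alpha> \<bullet> \<alpha>)) *\<^sub>R \<alpha>"

text \<open>T = exp(i a) is identified with a / (2 pi Z{H_alpha}); functions on T are
  periodic functions on a, evaluated at H for the point exp(iH).\<close>
definition torus_lattice :: "'a::euclidean_space set \<Rightarrow> 'a set" where
  "torus_lattice R = {(\<Sum>\<alpha>\<in>R. (of_int (n \<alpha>) * (2 * pi)) *\<^sub>R coroot \<alpha>) | n. True}"

definition fundamental_domain :: "'a::euclidean_space set \<Rightarrow> 'a set \<Rightarrow> bool" where
  "fundamental_domain R D \<longleftrightarrow> D \<in> sets lebesgue \<and> emeasure lebesgue D < \<infinity> \<and>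
     0 < measure lebesgue D \<and>
     (\<forall>H. \<exists>!p. fst p \<in> D \<and> snd p \<in> torus_lattice R \<and> H = fst p + snd p)"

text \<open>Integral against the normalized Haar measure dt on T.\<close>
definition torus_integral ::
    "'a::euclidean_space set \<Rightarrow> ('a \<Rightarrow> 'b::real_normed_vector) \<Rightarrow> 'b" where
  "torus_integral R f =
     (let D = (SOME D. fundamental_domain R D) in (1 / measure lebesgue D) *\<^sub>R integral D f)"

definition delta :: "'a::euclidean_space set \<Rightarrow> ('a \<Rightarrow> real) \<Rightarrow> 'a \<Rightarrow> real" where
  "delta Rp m H = (\<Prod>\<alpha>\<in>Rp.
      cmod (exp (\<i> * of_real (\<alpha> \<bullet> H)) - exp (- (\<i> * of_real (\<alpha> \<bullet> H)))) powr m \<alpha>)"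

definition orbit_sum :: "'a::euclidean_space set \<Rightarrow> 'a \<Rightarrow> 'a \<Rightarrow> complex" where
  "orbit_sum R \<nu> H = (\<Sum>\<nu>'\<in>(\<lambda>w. w \<nu>) ` weyl_group R. exp (\<i> * of_real (\<nu>' \<bullet> H)))"

definition inner_m ::
    "'a::euclidean_space set \<Rightarrow> 'a set \<Rightarrow> ('a \<Rightarrow> real) \<Rightarrow> ('a \<Rightarrow> complex) \<Rightarrow> ('a \<Rightarrow> complex) \<Rightarrow> complex" where
  "inner_m R Rp m f g = torus_integral R (\<lambda>H. f H * cnj (g H) * of_real (delta Rp m H))"

definition norm_m_sq ::
    "'a::euclidean_space set \<Rightarrow> 'a set \<Rightarrow> ('a \<Rightarrow> real) \<Rightarrow> ('a \<Rightarrow> complex) \<Rightarrow> real" where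
  "norm_m_sq R Rp m f = torus_integral R (\<lambda>H. (cmod (f H))\<^sup>2 * delta Rp m H)"

text \<open>Dominance order for the root system 2 Sigma: nu \<le> mu iff mu - nu is a
  non-negative integer combination of the positive roots 2 alpha.\<close>
definition dom_le :: "'a::euclidean_space set \<Rightarrow> 'a \<Rightarrow> 'a \<Rightarrow> bool" where
  "dom_le Rp \<nu> \<mu> \<longleftrightarrow> (\<exists>n::'a \<Rightarrow> nat. \<mu> - \<nu> = (\<Sum>\<alpha>\<in>Rp. of_nat (n \<alpha>) *\<^sub>R (2 *\<^sub>R \<alpha>)))"

definition jacobi_P ::
    "'a::euclidean_space set \<Rightarrow> 'a set \<Rightarrow> ('a \<Rightarrow> real) \<Rightarrow> 'a \<Rightarrow> 'a \<Rightarrow> complex" where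
  "jacobi_P R Rp m \<mu> = (THE f. (\<exists>c::'a \<Rightarrow> complex.
      f = (\<lambda>H. orbit_sum R \<mu> H +
             (\<Sum>\<nu>\<in>{\<nu>\<in>dominant Rp. dom_le Rp \<nu> \<mu> \<and> \<nu> \<noteq> \<mu>}. c \<nu> * orbit_sum R \<nu> H))) \<and>
      (\<forall>\<nu>\<in>dominant Rp. dom_le Rp \<nu> \<mu> \<and> \<nu> \<noteq> \<mu> \<longrightarrow> inner_m R Rp m f (orbit_sum R \<nu>) = 0))"

text \<open>F_{mu+rho} restricted to T: F_{mu+rho} = c(mu+rho) P_mu.\<close>
definition HO_F :: "'a::euclidean_space set \<Rightarrow> 'a set \<Rightarrow> ('a \<Rightarrow> real) \<Rightarrow> 'a \<Rightarrow> 'a \<Rightarrow> complex" where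
  "HO_F R Rp m \<mu> H = of_real (c_fun Rp m (\<mu> + rho Rp m)) * jacobi_P R Rp m \<mu> H"

definition I_delta :: "'a::euclidean_space set \<Rightarrow> 'a set \<Rightarrow> ('a \<Rightarrow> real) \<Rightarrow> real" where
  "I_delta R Rp m = torus_integral R (delta Rp m)"

end

theory Submission
  imports Defs
begin


lemma torus_integral_scale:
  "torus_integral R (\<lambda>H. (c::real) * f H) = c * torus_integral R f"
  unfolding torus_integral_def Let_def by simp

lemma weyl_zero: "w \<in> weyl_group R \<Longrightarrow> w 0 = 0"
  by (induction rule: weyl_group.induct) (auto simp: reflect_def)

lemma orbit_sum_zero: "orbit_sum R 0 = (\<lambda>H. 1)"
proof -
  have a: "(\<lambda>w. w 0) ` weyl_group R \<subseteq> {0}" using weyl_zero by auto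
  have "(0::'a) \<in> (\<lambda>w. w 0) ` weyl_group R"
    by (rule image_eqI[where x=id]) (simp_all add: weyl_group.weyl_id)
  with a have "(\<lambda>w. w 0) ` weyl_group R = {0}" by blast
  then show ?thesis by (intro ext) (simp add: orbit_sum_def)
qed

lemma dominant_inner: "\<nu> \<in> dominant Rp \<Longrightarrow> \<alpha> \<in> Rp \<Longrightarrow> \<nu> \<bullet> \<alpha> \<ge> 0"
proof -
  assume "\<nu> \<in> dominant Rp" "\<alpha> \<in> Rp"
  then have "coord \<nu> \<alpha> \<in> \<nat>" unfolding dominant_def by auto
  then have "coord \<nu> \<alpha> \<ge> 0" by (metis Nats_cases of_nat_0_le_iff)
  show "\<nu> \<bullet> \<alpha> \<ge> 0"
  proof (cases "\<alpha> = 0")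
    case False
    then have "\<alpha> \<bullet> \<alpha> > 0" by simp
    moreover have "\<nu> \<bullet> \<alpha> = coord \<nu> \<alpha> * (\<alpha> \<bullet> \<alpha>)" using False by (simp add: coord_def)
    ultimately show ?thesis using \<open>coord \<nu> \<alpha> \<ge> 0\<close> by simp
  qed simp
qed

lemma dom_below_zero: "\<nu> \<in> dominant Rp \<Longrightarrow> dom_le Rp \<nu> 0 \<Longrightarrow> \<nu> = 0"
proof -
  assume d: "\<nu> \<in> dominant Rp" and "dom_le Rp \<nu> 0"
  then obtain n :: "_ \<Rightarrow> nat" where n: "0 - \<nu> = (\<Sum>\<alpha>\<in>Rp. of_nat (n \<alpha>) *\<^sub>R (2 *\<^sub>R \<alpha>))"
    unfolding dom_le_def by blast
  have a: "\<nu> \<bullet> \<nu> = - ((0 - \<nu>) \<bullet> \<nu>)" by simp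
  have b: "(0 - \<nu>) \<bullet> \<nu> = (\<Sum>\<alpha>\<in>Rp. of_nat (n \<alpha>) * 2 * (\<alpha> \<bullet> \<nu>))"
    unfolding n by (simp add: inner_sum_left mult.assoc)
  have c: "(\<Sum>\<alpha>\<in>Rp. of_nat (n \<alpha>) * 2 * (\<alpha> \<bullet> \<nu>)) \<ge> 0"
    using dominant_inner[OF d] by (intro sum_nonneg) (simp add: inner_commute)
  have "\<nu> \<bullet> \<nu> \<le> 0" using a b c by linarith
  then show ?thesis by (metis inner_eq_zero_iff inner_ge_zero order_antisym)
qed

lemma jacobi_P_zero: "jacobi_P R Rp m 0 = (\<lambda>H. 1)"
proof -
  have e: "{\<nu>\<in>dominant Rp. dom_le Rp \<nu> 0 \<and> \<nu> \<noteq> 0} = {}"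
    using dom_below_zero by blast
  show ?thesis
    unfolding jacobi_P_def e
    by (rule the_equality) (auto simp: orbit_sum_zero dest: dom_below_zero)
qed

lemma rho_bound:
  assumes rs: "root_system R" and ps: "positive_system R Rp" and mu: "multiplicity R m"
    and a: "\<alpha> \<in> Rp"
  shows "rho Rp m \<bullet> \<alpha> \<ge> (m \<alpha> / 2 + m ((1/2) *\<^sub>R \<alpha>) / 4) * (\<alpha> \<bullet> \<alpha>)"
proof -
  obtain H0 where H0: "\<forall>\<alpha>\<in>R. \<alpha> \<bullet> H0 \<noteq> 0" and Rp: "Rp = {\<alpha>\<in>R. \<alpha> \<bullet> H0 > 0}"
    using ps unfolding positive_system_def by blast
  have fin: "finite R" and z: "0 \<notin> R" and refl: "\<And>\<beta>. \<beta> \<in> R \<Longrightarrow> reflect \<alpha> \<beta> \<in> R"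
    using rs a Rp unfolding root_system_def by auto
  have aR: "\<alpha> \<in> R" and aH: "\<alpha> \<bullet> H0 > 0" using a Rp by auto
  have an: "\<alpha> \<noteq> 0" using aR z by auto
  then have aa: "\<alpha> \<bullet> \<alpha> > 0" by simp
  have finp: "finite Rp" using fin Rp by auto
  have mpos: "\<And>\<beta>. \<beta> \<in> R \<Longrightarrow> m \<beta> > 0" and m0: "\<And>\<beta>. \<beta> \<notin> R \<Longrightarrow> m \<beta> = 0"
    using mu unfolding multiplicity_def by auto
  have winv: "\<And>\<beta>. \<beta> \<in> R \<Longrightarrow> m (reflect \<alpha> \<beta>) = m \<beta>"
  proof -
    fix \<beta> assume "\<beta> \<in> R"
    have "reflect \<alpha> \<circ> id \<in> weyl_group R" by (rule weyl_group.weyl_step[OF aR weyl_group.weyl_id])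
    then show "m (reflect \<alpha> \<beta>) = m \<beta>" using mu \<open>\<beta> \<in> R\<close> unfolding multiplicity_def by fastforce
  qed
  have rinner: "\<And>\<beta>. reflect \<alpha> \<beta> \<bullet> \<alpha> = - (\<beta> \<bullet> \<alpha>)"
    using aa by (simp add: reflect_def inner_diff_left)
  have rinv: "\<And>\<beta>. reflect \<alpha> (reflect \<alpha> \<beta>) = \<beta>"
    using aa by (simp add: reflect_def inner_diff_left algebra_simps)
  define f where "f \<beta> = m \<beta> * (\<beta> \<bullet> \<alpha>)" for \<beta>
  define C where "C = {\<beta>\<in>Rp. reflect \<alpha> \<beta> \<in> Rp}"
  define B where "B = {\<beta>\<in>Rp. reflect \<alpha> \<beta> \<notin> Rp}"
  have rho_eq: "rho Rp m \<bullet> \<alpha> = (1/2) * sum f Rp"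
    by (simp add: rho_def f_def inner_sum_left)
  have split: "sum f Rp = sum f C + sum f B"
    unfolding C_def B_def using finp by (subst sum.union_disjoint[symmetric]) (auto intro: sum.cong)
  have C0: "sum f C = 0"
  proof -
    have "sum f C = sum (f \<circ> reflect \<alpha>) C"
      by (rule sum.reindex_bij_witness[of _ "reflect \<alpha>" "reflect \<alpha>"]) (auto simp: C_def rinv)
    also have "\<dots> = - sum f C"
      unfolding sum_negf[symmetric]
      by (rule sum.cong) (auto simp: f_def C_def Rp winv rinner)
    finally show ?thesis by simp
  qed
  have Bpos: "\<And>\<beta>. \<beta> \<in> B \<Longrightarrow> f \<beta> \<ge> 0"
  proof -
    fix \<beta> assume "\<beta> \<in> B"
    then have bR: "\<beta> \<in> R" and bH: "\<beta> \<bullet> H0 > 0" and nr: "\<not> (reflect \<alpha> \<beta> \<bullet> H0 > 0)"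
      using refl by (auto simp: B_def Rp)
    have "reflect \<alpha> \<beta> \<bullet> H0 = \<beta> \<bullet> H0 - (2 * (\<beta> \<bullet> \<alpha>) / (\<alpha> \<bullet> \<alpha>)) * (\<alpha> \<bullet> H0)"
      by (simp add: reflect_def inner_diff_left)
    then have "(2 * (\<beta> \<bullet> \<alpha>) / (\<alpha> \<bullet> \<alpha>)) * (\<alpha> \<bullet> H0) > 0" using nr bH by linarith
    then have "2 * (\<beta> \<bullet> \<alpha>) / (\<alpha> \<bullet> \<alpha>) > 0" using aH by (metis zero_less_mult_pos2)
    then have "\<beta> \<bullet> \<alpha> > 0" using aa by (simp add: zero_less_divide_iff)
    then show "f \<beta> \<ge> 0" using mpos[OF bR] by (simp add: f_def)
  qed
  have aB: "\<alpha> \<in> B"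
    using a aH by (auto simp: B_def Rp reflect_def inner_diff_left)
  have finB: "finite B" using finp by (simp add: B_def)
  have "sum f B \<ge> f \<alpha> + f ((1/2) *\<^sub>R \<alpha>)"
  proof (cases "(1/2) *\<^sub>R \<alpha> \<in> R")
    case True
    have hB: "(1/2) *\<^sub>R \<alpha> \<in> B"
      using True aH by (auto simp: B_def Rp reflect_def inner_diff_left)
    have ne: "(1/2) *\<^sub>R \<alpha> \<noteq> \<alpha>" using an scaleR_cancel_right[of "1/2" \<alpha> 1] by simp
    have "f \<alpha> + f ((1/2) *\<^sub>R \<alpha>) = sum f {\<alpha>, (1/2) *\<^sub>R \<alpha>}" using ne by simp
    also have "\<dots> \<le> sum f B"
      by (rule sum_mono2[OF finB]) (use aB hB Bpos in auto)
    finally show ?thesis .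
  next
    case False
    have "f \<alpha> = sum f {\<alpha>}" by simp
    also have "\<dots> \<le> sum f B"
      by (rule sum_mono2[OF finB]) (use aB Bpos in auto)
    finally show ?thesis using False m0 by (simp add: f_def)
  qed
  moreover have "f \<alpha> + f ((1/2) *\<^sub>R \<alpha>) = (m \<alpha> + m ((1/2) *\<^sub>R \<alpha>) / 2) * (\<alpha> \<bullet> \<alpha>)"
    by (simp add: f_def algebra_simps)
  ultimately show ?thesis using rho_eq split C0 by (simp add: algebra_simps)
qed

lemma cstar_rho_pos:
  assumes rs: "root_system R" and ps: "positive_system R Rp" and mu: "multiplicity R m"
  shows "ctilde_star Rp m (- rho Rp m) > 0"
  unfolding ctilde_star_def
proof (rule prod_pos)
  fix \<alpha> assume a: "\<alpha> \<in> Rp"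
  have "\<alpha> \<in> R" "0 \<notin> R" using a ps rs unfolding positive_system_def root_system_def by auto
  then have aa: "\<alpha> \<bullet> \<alpha> > 0" by (metis inner_gt_zero_iff)
  have mpos: "m \<alpha> \<ge> 0" using mu \<open>\<alpha> \<in> R\<close> unfolding multiplicity_def by (auto intro: less_imp_le)
  have mh: "m ((1/2) *\<^sub>R \<alpha>) \<ge> 0" using mu unfolding multiplicity_def
    by (cases "(1/2) *\<^sub>R \<alpha> \<in> R") (auto intro: less_imp_le)
  have b: "rho Rp m \<bullet> \<alpha> / (\<alpha> \<bullet> \<alpha>) \<ge> m \<alpha> / 2 + m ((1/2) *\<^sub>R \<alpha>) / 4"
    using rho_bound[OF rs ps mu a] aa by (simp add: le_divide_eq)
  have c: "coord (- rho Rp m) \<alpha> = - (rho Rp m \<bullet> \<alpha> / (\<alpha> \<bullet> \<alpha>))" by (simp add: coord_def)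
  have g1: "1 - coord (- rho Rp m) \<alpha> - m ((1/2) *\<^sub>R \<alpha>) / 4 - m \<alpha> / 2 > 0"
    using b c mpos mh by linarith
  have g2: "1 - coord (- rho Rp m) \<alpha> - m ((1/2) *\<^sub>R \<alpha>) / 4 > 0"
    using b c mpos mh by linarith
  show "cstar_alpha m (- rho Rp m) \<alpha> > 0"
    unfolding cstar_alpha_def
    by (intro divide_pos_pos Gamma_real_pos g1 g2)
qed


theorem mainTheorem9:
  fixes R Rp :: "'a::euclidean_space set" and m :: "'a \<Rightarrow> real" and \<mu> :: 'a
  assumes "root_system R"
    and "positive_system R Rp"
    and "multiplicity R m"
    and "\<mu> \<in> dominant Rp"
    and opdam_norm_formula: "\<forall>\<nu>\<in>dominant Rp.
           norm_m_sq R Rp m (jacobi_P R Rp m \<nu>) =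
           real (card (weyl_group R)) * ctilde_star Rp m (- \<nu> - rho Rp m) / ctilde Rp m (\<nu> + rho Rp m)"
  shows "norm_m_sq R Rp m (HO_F R Rp m \<mu>) = I_delta R Rp m / d_fun Rp m \<mu>
       \<and> norm_m_sq R Rp m (HO_F R Rp m \<mu>) =
           I_delta R Rp m * cstar_fun Rp m (- \<mu> - rho Rp m) * c_fun Rp m (\<mu> + rho Rp m)"
proof -
  define W where "W = real (card (weyl_group R))"
  define a where "a = ctilde_star Rp m (- \<mu> - rho Rp m)"
  define b where "b = ctilde Rp m (\<mu> + rho Rp m)"
  define r where "r = ctilde Rp m (rho Rp m)"
  define s where "s = ctilde_star Rp m (- rho Rp m)"
  have s0: "s \<noteq> 0" using cstar_rho_pos[OF assms(1-3)] by (simp add: s_def)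
  have z: "0 \<in> dominant Rp" by (simp add: dominant_def coord_def)
  have I: "I_delta R Rp m = W * s / r"
    using opdam_norm_formula[rule_format, OF z]
    by (simp add: jacobi_P_zero norm_m_sq_def I_delta_def W_def s_def r_def)
  have P: "norm_m_sq R Rp m (jacobi_P R Rp m \<mu>) = W * a / b"
    using opdam_norm_formula assms(4) by (simp add: W_def a_def b_def)
  have F: "norm_m_sq R Rp m (HO_F R Rp m \<mu>) = (b / r)^2 * norm_m_sq R Rp m (jacobi_P R Rp m \<mu>)"
  proof -
    have h: "\<And>H. HO_F R Rp m \<mu> H = complex_of_real (b / r) * jacobi_P R Rp m \<mu> H"
      by (simp only: HO_F_def c_fun_def b_def r_def)
    have "\<And>H. (cmod (complex_of_real (b / r) * jacobi_P R Rp m \<mu> H))\<^sup>2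
           = (b / r)^2 * (cmod (jacobi_P R Rp m \<mu> H))\<^sup>2"
      by (simp only: norm_mult norm_of_real power_mult_distrib power2_abs)
    then have "(\<lambda>H. (cmod (HO_F R Rp m \<mu> H))\<^sup>2 * delta Rp m H)
        = (\<lambda>H. (b / r)^2 * ((cmod (jacobi_P R Rp m \<mu> H))\<^sup>2 * delta Rp m H))"
      by (intro ext) (simp only: h mult.assoc)
    then show ?thesis unfolding norm_m_sq_def by (simp add: torus_integral_scale)
  qed
  have cf: "c_fun Rp m (\<mu> + rho Rp m) = b / r" by (simp add: c_fun_def b_def r_def)
  have csf: "cstar_fun Rp m (- \<mu> - rho Rp m) = a / s" by (simp add: cstar_fun_def a_def s_def)
  have eq2: "norm_m_sq R Rp m (HO_F R Rp m \<mu>) =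
           I_delta R Rp m * cstar_fun Rp m (- \<mu> - rho Rp m) * c_fun Rp m (\<mu> + rho Rp m)"
    unfolding F P I cf csf using s0
    by (cases "b = 0") (simp_all add: field_simps power2_eq_square)
  have "I_delta R Rp m / d_fun Rp m \<mu> =
           I_delta R Rp m * cstar_fun Rp m (- \<mu> - rho Rp m) * c_fun Rp m (\<mu> + rho Rp m)"
    by (simp add: d_fun_def)
  with eq2 show ?thesis by simp
qed

end
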